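(* Let $(X,\mathcal U)$ be a $\Delta$-rotund quasi-uniform space (respectively, a $\Delta$-rotund uniform space), with $X$ carrying the topology $\tau_{\mathcal U}$. Then for every entourage $U\in\mathcal U$ there is a right-continuous $\mathcal U$-uniform quasi-pseudometric (respectively, pseudometric) $p:X\times X\to[0,1]$ such that $B_p(x,1)\subset\overline{B(x;U)}^\circ$ for every $x\in X$.
   Context: Entourages, $U\circ V$, $U^{-1}$, $B(x;U)=\{y:(x,y)\in U\}$. A quasi-uniformity on $X$ is a family $\mathcal U$ of subsets of $X\times X$ containing the diagonal, closed under supersets, any two members containing a common member, and such that for each $U\in\mathcal U$ some $V\in\mathcal U$ has $V\circ V\subset U$; it is a uniformity if moreover $U^{-1}\in\mathcal U$ for all $U\in\mathcal U$. Its topology $\tau_{\mathcal U}$: $W$ is open iff for every $x\in W$ some $U\in\mathcal U$ satisfies $B(x;U)\subset W$. $\overline S^\circ$ denotes the interior of the closure. A base $\mathcal B\subset\mathcal U$ (every member of $\mathcal U$ contains one from $\mathcal B$) is multiplicative if closed under $\circ$, and $\Delta$-rotund if $B(\overline{B(x;V)};U)\subset\overline{B(x;V\circ W\circ U)}$ for all $x\in X$, $U,V,W\in\mathcal B$ (where $B(A;U)=\bigcup_{a\in A}B(a;U)$). $(X,\mathcal U)$ is $\Delta$-rotund if $\mathcal U$ has a $\Delta$-rotund multiplicative base. A premetric $p$ ($p(x,x)=0$) is $\mathcal U$-uniform if $\{(x,y):p(x,y)<\varepsilon\}\in\mathcal U$ for every $\varepsilon>0$; right-continuous if $y\mapsto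 p(x,y)$ is continuous for each $x$; a quasi-pseudometric satisfies the triangle inequality; a pseudometric is a symmetric quasi-pseudometric. $B_p(x,1)=\{y:p(x,y)<1\}$. *)

theory Defs
  imports "HOL-Analysis.Analysis"
begin

text \<open>The underlying set X is the universe of the type 'a.
  Composition U \<circ> V of the paper is relational composition (first U then V),
  i.e. Isabelle's U O V; B(x;U) = U `` {x}, B(A;U) = U `` A.\<close>

definition quasi_uniformity :: "('a \<times> 'a) set set \<Rightarrow> bool" where
  "quasi_uniformity \<U> \<longleftrightarrow>
     (\<forall>U\<in>\<U>. Id \<subseteq> U) \<and>
     (\<forall>U\<in>\<U>. \<forall>V. U \<subseteq> V \<longrightarrow> V \<in> \<U>) \<and>
     (\<forall>U\<in>\<U>. \<forall>V\<in>\<U>. \<exists>W\<in>\<U>. W \<subseteq> U \<inter> V) \<and>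
     (\<forall>U\<in>\<U>. \<exists>V\<in>\<U>. V O V \<subseteq> U)"

definition uniformity :: "('a \<times> 'a) set set \<Rightarrow> bool" where
  "uniformity \<U> \<longleftrightarrow> quasi_uniformity \<U> \<and> (\<forall>U\<in>\<U>. U\<inverse> \<in> \<U>)"

definition uopen :: "('a \<times> 'a) set set \<Rightarrow> 'a set \<Rightarrow> bool" where
  "uopen \<U> W \<longleftrightarrow> (\<forall>x\<in>W. \<exists>U\<in>\<U>. U `` {x} \<subseteq> W)"

definition uclosure :: "('a \<times> 'a) set set \<Rightarrow> 'a set \<Rightarrow> 'a set" where
  "uclosure \<U> S = {x. \<forall>W. uopen \<U> W \<and> x \<in> W \<longrightarrow> W \<inter> S \<noteq> {}}"

definition uinterior :: "('a \<times> 'a) set set \<Rightarrow> 'a set \<Rightarrow> 'a set" where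
  "uinterior \<U> S = \<Union>{W. uopen \<U> W \<and> W \<subseteq> S}"

definition is_base :: "('a \<times> 'a) set set \<Rightarrow> ('a \<times> 'a) set set \<Rightarrow> bool" where
  "is_base \<U> \<B> \<longleftrightarrow> \<B> \<subseteq> \<U> \<and> (\<forall>U\<in>\<U>. \<exists>B\<in>\<B>. B \<subseteq> U)"

definition multiplicative :: "('a \<times> 'a) set set \<Rightarrow> bool" where
  "multiplicative \<B> \<longleftrightarrow> (\<forall>U\<in>\<B>. \<forall>V\<in>\<B>. U O V \<in> \<B>)"

definition delta_rotund_base :: "('a \<times> 'a) set set \<Rightarrow> ('a \<times> 'a) set set \<Rightarrow> bool" where
  "delta_rotund_base \<U> \<B> \<longleftrightarrow>
     (\<forall>x. \<forall>U\<in>\<B>. \<forall>V\<in>\<B>. \<forall>W\<in>\<B>.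
        U `` (uclosure \<U> (V `` {x})) \<subseteq> uclosure \<U> ((V O W O U) `` {x}))"

definition delta_rotund :: "('a \<times> 'a) set set \<Rightarrow> bool" where
  "delta_rotund \<U> \<longleftrightarrow>
     (\<exists>\<B>. is_base \<U> \<B> \<and> multiplicative \<B> \<and> delta_rotund_base \<U> \<B>)"

definition premetric :: "('a \<Rightarrow> 'a \<Rightarrow> real) \<Rightarrow> bool" where
  "premetric p \<longleftrightarrow> (\<forall>x y. 0 \<le> p x y) \<and> (\<forall>x. p x x = 0)"

definition quasi_pseudometric :: "('a \<Rightarrow> 'a \<Rightarrow> real) \<Rightarrow> bool" where
  "quasi_pseudometric p \<longleftrightarrow> premetric p \<and> (\<forall>x y z. p x z \<le> p x y + p y z)"

definition pseudometric :: "('a \<Rightarrow> 'a \<Rightarrow> real) \<Rightarrow> bool" where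
  "pseudometric p \<longleftrightarrow> quasi_pseudometric p \<and> (\<forall>x y. p x y = p y x)"

definition uniform_premetric :: "('a \<times> 'a) set set \<Rightarrow> ('a \<Rightarrow> 'a \<Rightarrow> real) \<Rightarrow> bool" where
  "uniform_premetric \<U> p \<longleftrightarrow> (\<forall>\<epsilon>>0. {(x, y). p x y < \<epsilon>} \<in> \<U>)"

definition right_continuous :: "('a \<times> 'a) set set \<Rightarrow> ('a \<Rightarrow> 'a \<Rightarrow> real) \<Rightarrow> bool" where
  "right_continuous \<U> p \<longleftrightarrow> (\<forall>x. \<forall>S. open S \<longrightarrow> uopen \<U> ((p x) -` S))"

end

theory Submission
  imports Defs
begin

lemma qu_Id: "quasi_uniformity \<U> \<Longrightarrow> A \<in> \<U> \<Longrightarrow> Id \<subseteq> A"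
  unfolding quasi_uniformity_def by (elim conjE) (erule bspec)
lemma qu_up: "quasi_uniformity \<U> \<Longrightarrow> A \<in> \<U> \<Longrightarrow> A \<subseteq> B \<Longrightarrow> B \<in> \<U>"
  unfolding quasi_uniformity_def by (elim conjE) blast
lemma qu_int: "quasi_uniformity \<U> \<Longrightarrow> A \<in> \<U> \<Longrightarrow> B \<in> \<U> \<Longrightarrow> \<exists>C\<in>\<U>. C \<subseteq> A \<inter> B"
  unfolding quasi_uniformity_def by (elim conjE) blast
lemma qu_sq: "quasi_uniformity \<U> \<Longrightarrow> A \<in> \<U> \<Longrightarrow> \<exists>B\<in>\<U>. B O B \<subseteq> A"
  unfolding quasi_uniformity_def by (elim conjE) blast

lemma ucl_sub: "S \<subseteq> uclosure \<U> S" unfolding uclosure_def by blast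
lemma ucl_mono: "S \<subseteq> T \<Longrightarrow> uclosure \<U> S \<subseteq> uclosure \<U> T" unfolding uclosure_def by blast
lemma ucl_notin:
  assumes "y \<notin> uclosure \<U> F" shows "\<exists>A\<in>\<U>. A``{y} \<inter> uclosure \<U> F = {}"
proof -
  obtain Ob where Ob: "uopen \<U> Ob" "y \<in> Ob" "Ob \<inter> F = {}" using assms unfolding uclosure_def by blast
  then obtain A where A: "A \<in> \<U>" "A``{y} \<subseteq> Ob" unfolding uopen_def by blast
  have "Ob \<inter> uclosure \<U> F = {}" using Ob unfolding uclosure_def by blast
  then show ?thesis using A by blast
qed

lemma cont_uopen:
  assumes "\<And>y e. e > 0 \<Longrightarrow> \<exists>A\<in>\<U>. \<forall>y'\<in>A``{y}. \<bar>g y' - g y\<bar> < (e::real)"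
  shows "\<forall>S. open S \<longrightarrow> uopen \<U> (g -` S)"
  unfolding uopen_def
proof (intro allI impI ballI)
  fix S y assume "open S" "y \<in> g -` S"
  then obtain e where e: "e > 0" "ball (g y) e \<subseteq> S" using open_contains_ball by blast
  from assms[OF e(1)] obtain A where "A\<in>\<U>" "\<forall>y'\<in>A``{y}. \<bar>g y' - g y\<bar> < e" by blast
  moreover have "A``{y} \<subseteq> g -` S"
  proof
    fix y' assume "y' \<in> A``{y}"
    then have "\<bar>g y' - g y\<bar> < e" using calculation by blast
    then have "g y' \<in> ball (g y) e" by (simp add: dist_real_def abs_minus_commute)
    then show "y' \<in> g -` S" using e by blast
  qed
  ultimately show "\<exists>U\<in>\<U>. U``{y} \<subseteq> g -` S" by blast
qed

lemma int_lemma: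
  assumes qu: "quasi_uniformity \<U>" and "A \<in> \<U>" and "A``{y} \<subseteq> S"
  shows "y \<in> uinterior \<U> S"
proof -
  let ?O = "{y'. \<exists>A\<in>\<U>. A``{y'} \<subseteq> S}"
  have "uopen \<U> ?O"
    unfolding uopen_def
  proof
    fix y' assume "y' \<in> ?O"
    then obtain A where A: "A\<in>\<U>" "A``{y'} \<subseteq> S" by blast
    obtain B where B: "B\<in>\<U>" "B O B \<subseteq> A" using qu_sq[OF qu A(1)] by blast
    have "B``{y'} \<subseteq> ?O"
    proof
      fix y'' assume "y'' \<in> B``{y'}"
      then have "B``{y''} \<subseteq> A``{y'}" using B(2) by blast
      then show "y'' \<in> ?O" using A B(1) by blast
    qed
    then show "\<exists>U\<in>\<U>. U``{y'} \<subseteq> ?O" using B(1) by blast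
  qed
  moreover have "?O \<subseteq> S"
  proof
    fix y' assume "y' \<in> ?O"
    then obtain A where A: "A \<in> \<U>" "A``{y'} \<subseteq> S" by blast
    have "Id \<subseteq> A" using qu_Id[OF qu A(1)] .
    then have "y' \<in> A``{y'}" by blast
    then show "y' \<in> S" using A(2) by blast
  qed
  moreover have "y \<in> ?O" using assms(2,3) by blast
  ultimately show ?thesis unfolding uinterior_def by (intro UnionI[of ?O]) auto
qed

lemma dy: "0 \<le> (c::real) \<Longrightarrow> \<exists>K::nat. 1 \<le> K \<and> c < real K / 2^N \<and> real K / 2^N \<le> c + 1/2^N"
proof -
  assume c: "0 \<le> c"
  define K where "K = nat \<lfloor>c * 2^N\<rfloor> + 1"
  have f: "of_int \<lfloor>c * 2^N\<rfloor> \<le> c * 2^N" "c * 2^N < of_int \<lfloor>c * 2^N\<rfloor> + 1" 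
    by (rule of_int_floor_le) (rule real_of_int_floor_add_one_gt)
  have "0 \<le> \<lfloor>c * 2^N\<rfloor>" using c by simp
  then have rK: "real K = of_int \<lfloor>c * 2^N\<rfloor> + 1" unfolding K_def by simp
  have p: "(0::real) < 2^N" by simp
  have "c * 2^N < real K" using f rK by linarith
  then have "c < real K / 2^N" using p by (simp add: pos_less_divide_eq)
  moreover have "real K \<le> c * 2^N + 1" using f rK by linarith
  then have "real K / 2^N \<le> c + 1/2^N" using p by (simp add: pos_divide_le_eq distrib_right)
  moreover have "1 \<le> K" unfolding K_def by simp
  ultimately show ?thesis by blast
qed

lemma exn: "e > 0 \<Longrightarrow> \<exists>n. 2/(2::real)^n < e"
proof -
  assume "e > 0"
  then obtain n where "(1/2::real)^n < e/2" using real_arch_pow_inv[of "e/2" "1/2"] by auto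
  then show ?thesis by (auto simp: power_one_over field_simps)
qed

locale DR =
  fixes \<U> :: "('a\<times>'a) set set" and \<B> and U
  assumes qu: "quasi_uniformity \<U>" and base: "is_base \<U> \<B>" and mult: "multiplicative \<B>"
    and rot: "delta_rotund_base \<U> \<B>" and U: "U \<in> \<U>"
begin

lemma Id_sub: "A \<in> \<U> \<Longrightarrow> Id \<subseteq> A" using qu qu_Id by blast
lemma B_U: "A \<in> \<B> \<Longrightarrow> A \<in> \<U>" using base unfolding is_base_def by (elim conjE) blast
lemma up: "A \<in> \<U> \<Longrightarrow> A \<subseteq> B \<Longrightarrow> B \<in> \<U>" using qu qu_up by blast
lemma inter: assumes "A \<in> \<U>" "B \<in> \<U>" shows "A \<inter> B \<in> \<U>"
proof -
  obtain C where "C \<in> \<U>" "C \<subseteq> A \<inter> B" using qu_int[OF qu assms] by blast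
  then show ?thesis by (rule up)
qed
lemma rotl: "A \<in> \<B> \<Longrightarrow> V \<in> \<B> \<Longrightarrow> Wm \<in> \<B> \<Longrightarrow>
   A``(uclosure \<U> (V``{x})) \<subseteq> uclosure \<U> ((V O Wm O A)``{x})"
  using rot unfolding delta_rotund_base_def by auto
lemma mult': "A \<in> \<B> \<Longrightarrow> C \<in> \<B> \<Longrightarrow> A O C \<in> \<B>" using mult unfolding multiplicative_def by auto

lemma ex0: "\<exists>B. B \<in> \<B> \<and> B \<subseteq> U" using base U unfolding is_base_def by (elim conjE) blast
lemma exS: "A \<in> \<B> \<Longrightarrow> \<exists>B. B \<in> \<B> \<and> B O B \<subseteq> A"
proof -
  assume "A \<in> \<B>"
  then have "A \<in> \<U>" by (rule B_U)
  then obtain C where "C \<in> \<U>" "C O C \<subseteq> A" using qu_sq[OF qu] by blast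
  then obtain B where "B \<in> \<B>" "B \<subseteq> C" using base unfolding is_base_def by (elim conjE) blast
  then have "B O B \<subseteq> C O C" by (simp add: relcomp_mono)
  then show ?thesis using \<open>B \<in> \<B>\<close> \<open>C O C \<subseteq> A\<close> by blast
qed

primrec W :: "nat \<Rightarrow> ('a\<times>'a) set" where
  "W 0 = (SOME B. B \<in> \<B> \<and> B \<subseteq> U)"
| "W (Suc n) = (SOME B. B \<in> \<B> \<and> B O B \<subseteq> W n)"

lemma W0: "W 0 \<in> \<B> \<and> W 0 \<subseteq> U" using someI_ex[OF ex0] by simp
lemma W_B: "W n \<in> \<B>"
proof (induction n)
  case 0 then show ?case using W0 by blast
next
  case (Suc n) then show ?case using someI_ex[OF exS[OF Suc]] by simp
qed
lemma WS: "W (Suc n) O W (Suc n) \<subseteq> W n" using someI_ex[OF exS[OF W_B[of n]]] by simp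
lemma W_U: "W n \<in> \<U>" using B_U W_B by blast
lemma W_Id: "Id \<subseteq> W n" using Id_sub W_U by blast

declare W.simps[simp del]

primrec V :: "nat \<Rightarrow> nat \<Rightarrow> ('a\<times>'a) set" where
  "V 0 k = W 0 ^^ k"
| "V (Suc n) k = (if even k then V n (k div 2) else if k = 1 then W (Suc n) else V n (k div 2) O W (Suc n))"

lemma V1: "V n 1 = W n" by (cases n) auto

lemma VB0: "1 \<le> k \<Longrightarrow> W 0 ^^ k \<in> \<B>"
proof (induction k rule: dec_induct)
  case base show ?case using W_B[of 0] by simp
next
  case (step k) then show ?case using mult'[OF step.IH W_B[of 0]] by simp
qed

lemma VB: "1 \<le> k \<Longrightarrow> V n k \<in> \<B>"
proof (induction n arbitrary: k)
  case 0 then show ?case using VB0 by simp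
next
  case (Suc n k)
  show ?case
  proof (cases "even k")
    case True
    then have k2: "1 \<le> k div 2" using Suc.prems by presburger
    have "V (Suc n) k = V n (k div 2)" by (simp only: V.simps if_P[OF True])
    then show ?thesis using Suc.IH[OF k2] by simp
  next
    case False
    show ?thesis
    proof (cases "k = 1")
      case True then show ?thesis using W_B V1 by simp
    next
      case k: False
      then have k2: "1 \<le> k div 2" using Suc.prems False k by presburger
      have "V (Suc n) k = V n (k div 2) O W (Suc n)" by (simp only: V.simps if_not_P[OF False] if_not_P[OF k])
      then show ?thesis using mult'[OF Suc.IH[OF k2] W_B] by simp
    qed
  qed
qed

lemma K: "1 \<le> k \<Longrightarrow> V n k O W n \<subseteq> V n (Suc k)"
proof (induction n arbitrary: k)
  case 0 then show ?case by simp
next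
  case (Suc n k)
  show ?case
  proof (cases "even k")
    case True
    then obtain j where j: "k = 2*j" by blast
    then have "j \<noteq> 0" using Suc.prems by simp
    then show ?thesis using j by simp
  next
    case False
    show ?thesis
    proof (cases "k = 1")
      case True
      have "V (Suc n) (Suc k) = W n" using True V1 by simp
      then show ?thesis using True WS by simp
    next
      case k: False
      define j where "j = k div 2"
      have j1: "k = 2*j+1" using False unfolding j_def by simp
      then have j: "k = 2*j+1" "1 \<le> j" using k by auto
      have eq1: "V (Suc n) k = V n j O W (Suc n)" using j by simp
      have eq2: "V (Suc n) (Suc k) = V n (Suc j)" using j by simp
      have "V (Suc n) k O W (Suc n) = V n j O (W (Suc n) O W (Suc n))" using eq1 by (simp add: O_assoc)
      also have "\<dots> \<subseteq> V n j O W n" using WS by (simp add: relcomp_mono)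
      also have "\<dots> \<subseteq> V n (Suc j)" using Suc.IH j by simp
      finally show ?thesis using eq2 by simp
    qed
  qed
qed

lemma Vmono1: "1 \<le> k \<Longrightarrow> V n k \<subseteq> V n (Suc k)"
proof -
  assume k: "1 \<le> k"
  have "V n k = V n k O Id" by simp
  also have "\<dots> \<subseteq> V n k O W n" by (rule relcomp_mono[OF order_refl W_Id])
  also have "\<dots> \<subseteq> V n (Suc k)" using K k by blast
  finally show ?thesis .
qed

lemma Vmono: assumes "1 \<le> k" "k \<le> l" shows "V n k \<subseteq> V n l"
  using assms(2)
proof (induction l rule: dec_induct)
  case base then show ?case by simp
next
  case (step l) then show ?case using Vmono1[of l n] assms(1) by auto
qed

lemma Vscale: "V (n + j) (k * 2^j) = V n k"
  by (induction j) (auto simp: mult.assoc[symmetric] mult.commute[of k])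

lemma Vtop: "V n (2^n) = W 0"
  using Vscale[of 0 n 1] by simp

lemma Vle:
  assumes "1 \<le> k" "1 \<le> l" "real k / 2^n \<le> real l / 2^m"
  shows "V n k \<subseteq> V m l"
proof -
  have "real k / 2^n * (2^n * 2^m) \<le> real l / 2^m * (2^n * 2^m)" using assms(3) by (intro mult_right_mono) simp_all
  moreover have "real k / 2^n * (2^n * 2^m) = real k * 2^m" by simp
  moreover have "real l / 2^m * (2^n * 2^m) = real l * 2^n" by simp
  ultimately have "real k * 2^m \<le> real l * 2^n" by simp
  then have "real (k * 2^m) \<le> real (l * 2^n)" by simp
  then have le: "k * 2^m \<le> l * 2^n" by (simp only: of_nat_le_iff)
  have "V n k = V (n+m) (k * 2^m)" by (simp add: Vscale)
  also have "\<dots> \<subseteq> V (n+m) (l * 2^n)" using le assms(1) by (intro Vmono) simp_all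
  also have "\<dots> = V m l" using Vscale[of m n l] by (simp add: add.commute)
  finally show ?thesis .
qed

definition Sz :: "'a \<Rightarrow> 'a \<Rightarrow> real set" where
  "Sz z y = {real k / 2^n | n k. 1 \<le> k \<and> y \<in> uclosure \<U> (V n k `` {z})} \<union> {1}"

definition phi :: "'a \<Rightarrow> 'a \<Rightarrow> real" where "phi z y = Inf (Sz z y)"

lemma one_Sz: "1 \<in> Sz z y" unfolding Sz_def by (rule UnI2) simp
lemma Sz_ne: "Sz z y \<noteq> {}" using one_Sz by blast
lemma Sz_bdd: "bdd_below (Sz z y)"
  unfolding Sz_def bdd_below_def by (intro exI[of _ 0]) auto

lemma phi_le: "s \<in> Sz z y \<Longrightarrow> phi z y \<le> s"
  unfolding phi_def using Sz_bdd by (rule cInf_lower[rotated])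
lemma phi_le1: "phi z y \<le> 1" by (rule phi_le[OF one_Sz])
lemma phi_ge0: "0 \<le> phi z y"
  unfolding phi_def using Sz_ne by (rule cInf_greatest) (auto simp: Sz_def)
lemma phi_lt: "phi z y < t \<Longrightarrow> \<exists>s\<in>Sz z y. s < t"
  unfolding phi_def using cInf_less_iff[OF Sz_ne Sz_bdd] by blast
lemma phi_mem: "1 \<le> k \<Longrightarrow> y \<in> uclosure \<U> (V n k``{z}) \<Longrightarrow> phi z y \<le> real k / 2^n"
proof -
  assume a: "1 \<le> k" "y \<in> uclosure \<U> (V n k``{z})"
  have "real k / 2^n \<in> Sz z y" unfolding Sz_def using a by blast
  then show ?thesis by (rule phi_le)
qed

lemma Sz_cases:
  assumes "s \<in> Sz z y" "s < 1"
  obtains n k where "1 \<le> k" "s = real k / 2^n" "y \<in> uclosure \<U> (V n k `` {z})"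
  using assms unfolding Sz_def by auto

lemma phi_zz: "phi z z = 0"
proof (rule ccontr)
  assume "phi z z \<noteq> 0"
  then have "phi z z > 0" using phi_ge0[of z z] by linarith
  then obtain n where n: "2/(2::real)^n < phi z z" using exn by blast
  have "(z,z) \<in> W n" using W_Id[of n] by blast
  then have "z \<in> V n 1 `` {z}" unfolding V1 by blast
  then have "z \<in> uclosure \<U> (V n 1 `` {z})" using ucl_sub[of "V n 1 `` {z}" \<U>] by blast
  then have "phi z z \<le> 1/2^n" using phi_mem[of 1 z n z] by simp
  moreover have "(1::real)/2^n \<le> 2/2^n" by (simp add: divide_right_mono)
  ultimately show False using n by linarith
qed

lemma step_cl:
  assumes "1 \<le> k" "x \<in> uclosure \<U> (V n k``{z})" "(x,y) \<in> W (Suc n)"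
  shows "y \<in> uclosure \<U> (V n (Suc k)``{z})"
proof -
  have "y \<in> W (Suc n) `` uclosure \<U> (V n k``{z})" using assms by blast
  also have "\<dots> \<subseteq> uclosure \<U> ((V n k O W (Suc n) O W (Suc n))``{z})"
    using rotl[OF W_B VB[OF assms(1)] W_B] .
  also have "\<dots> \<subseteq> uclosure \<U> (V n (Suc k)``{z})"
  proof (rule ucl_mono, rule Image_mono)
    have "V n k O W (Suc n) O W (Suc n) \<subseteq> V n k O W n" using WS by (simp add: relcomp_mono)
    also have "\<dots> \<subseteq> V n (Suc k)" using K assms(1) by blast
    finally show "V n k O W (Suc n) O W (Suc n) \<subseteq> V n (Suc k)" .
  qed simp
  finally show ?thesis .
qed

lemma phi_int: "phi z y < 1 \<Longrightarrow> y \<in> uinterior \<U> (uclosure \<U> (U``{z}))"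
proof -
  assume "phi z y < 1"
  then obtain s where "s \<in> Sz z y" "s < 1" using phi_lt by blast
  then obtain n k where nk: "1 \<le> k" "s = real k / 2^n" "y \<in> uclosure \<U> (V n k `` {z})"
    by (rule Sz_cases)
  have "real k / 2^n < 1" using nk \<open>s < 1\<close> by simp
  then have "real k < 2^n" by (simp add: divide_less_eq)
  then have "real k < real (2^n)" by simp
  then have "k < 2^n" by (simp only: of_nat_less_iff)
  have "W (Suc n) `` {y} \<subseteq> uclosure \<U> (U``{z})"
  proof
    fix y' assume "y' \<in> W (Suc n) `` {y}"
    then have "y' \<in> uclosure \<U> (V n (Suc k)``{z})" using step_cl[OF nk(1) nk(3)] by blast
    moreover have "V n (Suc k) \<subseteq> U"
    proof -
      have "V n (Suc k) \<subseteq> V n (2^n)" using \<open>k < 2^n\<close> by (intro Vmono) auto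
      then show ?thesis using Vtop W0 by auto
    qed
    ultimately show "y' \<in> uclosure \<U> (U``{z})" using ucl_mono[of "V n (Suc k)``{z}" "U``{z}"] by blast
  qed
  then show ?thesis using int_lemma[OF qu W_U] by blast
qed

lemma phi_step:
  assumes "(x,y) \<in> W (Suc n)"
  shows "phi z y \<le> phi z x + 2/2^n"
proof -
  have "phi z y - 2/2^n \<le> phi z x"
    unfolding phi_def[of z x]
  proof (rule cInf_greatest[OF Sz_ne])
    fix s assume s: "s \<in> Sz z x"
    show "phi z y - 2/2^n \<le> s"
    proof (cases "s < 1")
      case False
      have "(0::real) \<le> 2/2^n" by simp
      then show ?thesis using False phi_le1[of z y] by linarith
    next
      case True
      obtain m l where ml: "1 \<le> l" "s = real l / 2^m" "x \<in> uclosure \<U> (V m l `` {z})"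
        using s True by (rule Sz_cases)
      have "0 \<le> s" using ml by simp
      then obtain k where k: "1 \<le> k" "s < real k / 2^n" "real k / 2^n \<le> s + 1/2^n" using dy by blast
      have "real l / 2^m \<le> real k / 2^n" using ml(2) k(2) by linarith
      then have VV: "V m l \<subseteq> V n k" by (rule Vle[OF ml(1) k(1)])
      have "x \<in> uclosure \<U> (V n k `` {z})" using ucl_mono[OF Image_mono[OF VV subset_refl]] ml(3) by blast
      then have "y \<in> uclosure \<U> (V n (Suc k) `` {z})" by (rule step_cl[OF k(1) _ assms])
      then have "phi z y \<le> real (Suc k) / 2^n" by (rule phi_mem[rotated]) simp
      also have "\<dots> = real k / 2^n + 1/2^n" by (simp add: add_divide_distrib)
      finally show ?thesis using k by simp
    qed
  qed
  then show ?thesis by simp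
qed

lemma phi_lsc:
  assumes "e > 0" shows "\<exists>A\<in>\<U>. \<forall>y'\<in>A``{y}. phi z y' > phi z y - e"
proof (cases "phi z y - e < 0")
  case True
  show ?thesis
  proof (intro bexI[of _ U] ballI)
    fix y' show "phi z y' > phi z y - e" using True phi_ge0[of z y'] by linarith
  qed (rule U)
next
  case False
  define c where "c = phi z y - e"
  have c0: "0 \<le> c" using False c_def by simp
  obtain N where N: "2/(2::real)^N < e" using exn assms by blast
  obtain K where K: "1 \<le> K" "c < real K / 2^N" "real K / 2^N \<le> c + 1/2^N" using dy[OF c0] by blast
  have "(1::real)/2^N \<le> 2/2^N" by (simp add: divide_right_mono)
  then have Klt: "real K / 2^N < phi z y" using K N c_def by linarith
  have sub: "phi z y' \<le> c \<Longrightarrow> y' \<in> uclosure \<U> (V N K``{z})" for y'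
  proof -
    assume "phi z y' \<le> c"
    then have "phi z y' < real K / 2^N" using K by linarith
    then obtain s where s: "s \<in> Sz z y'" "s < real K / 2^N" using phi_lt by blast
    have "s < 1" using s Klt phi_le1[of z y] by linarith
    obtain m l where ml: "1 \<le> l" "s = real l / 2^m" "y' \<in> uclosure \<U> (V m l `` {z})"
      using s(1) \<open>s < 1\<close> by (rule Sz_cases)
    have "real l / 2^m \<le> real K / 2^N" using ml(2) s(2) by linarith
    then have VV: "V m l \<subseteq> V N K" by (rule Vle[OF ml(1) K(1)])
    show ?thesis using ucl_mono[OF Image_mono[OF VV subset_refl]] ml(3) by blast
  qed
  have ny: "y \<notin> uclosure \<U> (V N K``{z})"
  proof
    assume h: "y \<in> uclosure \<U> (V N K``{z})"
    have "phi z y \<le> real K / 2^N" by (rule phi_mem[OF K(1) h])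
    then show False using Klt by linarith
  qed
  obtain A where A: "A \<in> \<U>" "A``{y} \<inter> uclosure \<U> (V N K``{z}) = {}" using ucl_notin[OF ny] by blast
  show ?thesis
  proof (intro bexI[OF _ A(1)] ballI)
    fix y' assume "y' \<in> A``{y}"
    then have "y' \<notin> uclosure \<U> (V N K``{z})" using A by blast
    then have "\<not> phi z y' \<le> c" using sub[of y'] by blast
    then show "phi z y' > phi z y - e" using c_def by linarith
  qed
qed

definition p :: "'a \<Rightarrow> 'a \<Rightarrow> real" where "p x y = (SUP z. max 0 (phi z y - phi z x))"

lemma p_bdd: "bdd_above (range (\<lambda>z. max 0 (phi z y - phi z x)))"
  unfolding bdd_above_def
proof (intro exI[of _ 1] ballI)
  fix t assume "t \<in> range (\<lambda>z. max 0 (phi z y - phi z x))"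
  then obtain z where t: "t = max 0 (phi z y - phi z x)" by blast
  show "t \<le> 1" unfolding t using phi_le1[of z y] phi_ge0[of z x] by simp
qed
lemma p_ge: "max 0 (phi z y - phi z x) \<le> p x y"
  unfolding p_def by (rule cSUP_upper[OF _ p_bdd]) simp
lemma p_le: "(\<And>z. max 0 (phi z y - phi z x) \<le> c) \<Longrightarrow> p x y \<le> c"
  unfolding p_def by (rule cSUP_least) auto
lemma p_lt: "c < p x y \<Longrightarrow> \<exists>z. c < max 0 (phi z y - phi z x)"
  unfolding p_def using less_cSUP_iff[OF _ p_bdd] by blast

lemma p_0: "0 \<le> p x y" using p_ge[of x y x] by (meson max.cobounded1 order_trans)
lemma p_1: "p x y \<le> 1"
proof (rule p_le)
  fix z show "max 0 (phi z y - phi z x) \<le> 1" using phi_le1[of z y] phi_ge0[of z x] by simp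
qed
lemma p_xx: "p x x = 0" using p_0[of x x] by (intro antisym p_le) auto
lemma p_tri: "p x z \<le> p x y + p y z"
proof (rule p_le)
  fix w
  have "max 0 (phi w z - phi w x) \<le> max 0 (phi w y - phi w x) + max 0 (phi w z - phi w y)" by simp
  also have "\<dots> \<le> p x y + p y z" using p_ge by (intro add_mono)
  finally show "max 0 (phi w z - phi w x) \<le> p x y + p y z" .
qed
lemma p_step: assumes "(x,y) \<in> W (Suc n)" shows "p x y \<le> 2/2^n"
proof (rule p_le)
  fix z
  have "phi z y \<le> phi z x + 2/2^n" by (rule phi_step[OF assms])
  moreover have "(0::real) \<le> 2/2^n" by simp
  ultimately show "max 0 (phi z y - phi z x) \<le> 2/2^n" by simp
qed

lemma p_unif: "uniform_premetric \<U> p"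
  unfolding uniform_premetric_def
proof (intro allI impI)
  fix e :: real assume "e > 0"
  then obtain n where n: "2/(2::real)^n < e" using exn by blast
  have "W (Suc n) \<subseteq> {(x, y). p x y < e}" using p_step n by fastforce
  then show "{(x, y). p x y < e} \<in> \<U>" using up W_U by blast
qed

lemma p_rc: "right_continuous \<U> p"
  unfolding right_continuous_def
proof
  fix x
  show "\<forall>S. open S \<longrightarrow> uopen \<U> (p x -` S)"
  proof (rule cont_uopen)
    fix y and e :: real assume e: "e > 0"
    obtain n where n: "2/(2::real)^n < e" using exn e by blast
    have up1: "\<forall>y'\<in>W (Suc n)``{y}. p x y' < p x y + e"
    proof
      fix y' assume "y' \<in> W (Suc n)``{y}"
      then have "(y,y') \<in> W (Suc n)" by blast
      then have "p y y' \<le> 2/2^n" by (rule p_step)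
      then show "p x y' < p x y + e" using p_tri[of x y' y] n by linarith
    qed
    obtain A2 where A2: "A2 \<in> \<U>" "\<forall>y'\<in>A2``{y}. p x y' > p x y - e"
    proof (cases "p x y < e")
      case True
      show ?thesis
      proof (rule that[OF U], intro ballI)
        fix y' show "p x y' > p x y - e" using True p_0[of x y'] by linarith
      qed
    next
      case False
      then obtain z where z: "p x y - e/2 < max 0 (phi z y - phi z x)" using p_lt[of "p x y - e/2" x y] e by auto
      then have z': "p x y - e/2 < phi z y - phi z x" using False e by auto
      obtain B where B: "B \<in> \<U>" "\<forall>y'\<in>B``{y}. phi z y' > phi z y - e/2" using phi_lsc e by (meson half_gt_zero)
      show ?thesis
      proof (rule that[OF B(1)], intro ballI)
        fix y' assume "y' \<in> B``{y}"
        then have "phi z y' > phi z y - e/2" using B by blast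
        moreover have "phi z y' - phi z x \<le> p x y'" using p_ge[of z y' x] by simp
        ultimately show "p x y' > p x y - e" using z' by linarith
      qed
    qed
    show "\<exists>A\<in>\<U>. \<forall>y'\<in>A``{y}. \<bar>p x y' - p x y\<bar> < e"
    proof (intro bexI[of _ "W (Suc n) \<inter> A2"] ballI)
      fix y' assume "y' \<in> (W (Suc n) \<inter> A2)``{y}"
      then have "y' \<in> W (Suc n)``{y}" "y' \<in> A2``{y}" by blast+
      then have "p x y' < p x y + e" "p x y' > p x y - e" using up1 A2(2) by blast+
      then show "\<bar>p x y' - p x y\<bar> < e" by (simp add: abs_less_iff)
    qed (rule inter[OF W_U A2(1)])
  qed
qed

lemma exP: "\<exists>p. (\<forall>x y. p x y \<in> {0..1}) \<and> quasi_pseudometric p \<and>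
                 uniform_premetric \<U> p \<and> right_continuous \<U> p \<and>
                 (\<forall>x. {y. p x y < 1} \<subseteq> uinterior \<U> (uclosure \<U> (U `` {x})))"
proof (intro exI[of _ p] conjI allI)
  show "p x y \<in> {0..1}" for x y using p_0 p_1 by simp
  show "quasi_pseudometric p" unfolding quasi_pseudometric_def premetric_def using p_0 p_xx p_tri by blast
  show "uniform_premetric \<U> p" by (rule p_unif)
  show "right_continuous \<U> p" by (rule p_rc)
  show "{y. p x y < 1} \<subseteq> uinterior \<U> (uclosure \<U> (U `` {x}))" for x
  proof
    fix y assume "y \<in> {y. p x y < 1}"
    then have "phi x y < 1" using p_ge[of x y x] phi_zz by auto
    then show "y \<in> uinterior \<U> (uclosure \<U> (U `` {x}))" by (rule phi_int)
  qed
qed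

definition q :: "'a \<Rightarrow> 'a \<Rightarrow> real" where "q x y = max (p x y) (p y x)"

lemma exQ:
  assumes sym: "\<forall>A\<in>\<U>. A\<inverse> \<in> \<U>"
  shows "\<exists>p. (\<forall>x y. p x y \<in> {0..1}) \<and> pseudometric p \<and>
                 uniform_premetric \<U> p \<and> right_continuous \<U> p \<and>
                 (\<forall>x. {y. p x y < 1} \<subseteq> uinterior \<U> (uclosure \<U> (U `` {x})))"
proof (intro exI[of _ q] conjI allI)
  show "q x y \<in> {0..1}" for x y using p_0[of x y] p_1[of x y] p_0[of y x] p_1[of y x] unfolding q_def by simp
  have q1: "0 \<le> q x y" for x y using p_0[of x y] by (simp add: q_def)
  have q2: "q x x = 0" for x by (simp add: q_def p_xx)
  have q3: "q x z \<le> q x y + q y z" for x y z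
    using p_tri[of x z y] p_tri[of z x y] unfolding q_def max_def by auto
  have q4: "q x y = q y x" for x y by (simp add: q_def max.commute)
  show "pseudometric q" unfolding pseudometric_def quasi_pseudometric_def premetric_def
    using q1 q2 q3 q4 by blast
  show "uniform_premetric \<U> q"
    unfolding uniform_premetric_def
  proof (intro allI impI)
    fix e :: real assume "e > 0"
    then obtain n where n: "2/(2::real)^n < e" using exn by blast
    have "W (Suc n) \<inter> (W (Suc n))\<inverse> \<subseteq> {(x, y). q x y < e}" using p_step n unfolding q_def by fastforce
    then show "{(x, y). q x y < e} \<in> \<U>" using up inter W_U sym by blast
  qed
  show "right_continuous \<U> q"
    unfolding right_continuous_def
  proof
    fix x
    show "\<forall>S. open S \<longrightarrow> uopen \<U> (q x -` S)"
    proof (rule cont_uopen)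
      fix y and e :: real assume e: "e > 0"
      obtain n where n: "2/(2::real)^n < e" using exn e by blast
      have "W (Suc n) \<inter> (W (Suc n))\<inverse> \<in> \<U>" using inter W_U sym by blast
      moreover have "\<bar>q x y' - q x y\<bar> < e" if "y' \<in> (W (Suc n) \<inter> (W (Suc n))\<inverse>)``{y}" for y'
      proof -
        have a: "p y y' \<le> 2/2^n" "p y' y \<le> 2/2^n" using that p_step by auto
        show ?thesis using a n p_tri[of x y' y] p_tri[of x y y'] p_tri[of y' x y] p_tri[of y x y']
          unfolding q_def abs_less_iff max_def by auto
      qed
      ultimately show "\<exists>A\<in>\<U>. \<forall>y'\<in>A``{y}. \<bar>q x y' - q x y\<bar> < e" by blast
    qed
  qed
  show "{y. q x y < 1} \<subseteq> uinterior \<U> (uclosure \<U> (U `` {x}))" for x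
  proof
    fix y assume "y \<in> {y. q x y < 1}"
    then have "phi x y < 1" using p_ge[of x y x] phi_zz unfolding q_def by auto
    then show "y \<in> uinterior \<U> (uclosure \<U> (U `` {x}))" by (rule phi_int)
  qed
qed

end

theorem corollary2p14:
  fixes \<U> :: "('a \<times> 'a) set set"
  shows "(quasi_uniformity \<U> \<and> delta_rotund \<U> \<longrightarrow>
            (\<forall>U\<in>\<U>. \<exists>p. (\<forall>x y. p x y \<in> {0..1}) \<and> quasi_pseudometric p \<and>
                 uniform_premetric \<U> p \<and> right_continuous \<U> p \<and>
                 (\<forall>x. {y. p x y < 1} \<subseteq> uinterior \<U> (uclosure \<U> (U `` {x})))))
       \<and> (uniformity \<U> \<and> delta_rotund \<U> \<longrightarrow>
            (\<forall>U\<in>\<U>. \<exists>p. (\<forall>x y. p x y \<in> {0..1}) \<and> pseudometric p \<and>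
                 uniform_premetric \<U> p \<and> right_continuous \<U> p \<and>
                 (\<forall>x. {y. p x y < 1} \<subseteq> uinterior \<U> (uclosure \<U> (U `` {x})))))"
proof (intro conjI impI ballI)
  fix U assume a: "quasi_uniformity \<U> \<and> delta_rotund \<U>" and U: "U \<in> \<U>"
  then obtain \<B> where "is_base \<U> \<B>" "multiplicative \<B>" "delta_rotund_base \<U> \<B>"
    unfolding delta_rotund_def by blast
  then interpret DR \<U> \<B> U using a U by unfold_locales auto
  show "\<exists>p. (\<forall>x y. p x y \<in> {0..1}) \<and> quasi_pseudometric p \<and>
                 uniform_premetric \<U> p \<and> right_continuous \<U> p \<and>
                 (\<forall>x. {y. p x y < 1} \<subseteq> uinterior \<U> (uclosure \<U> (U `` {x})))" by (rule exP)
next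
  fix U assume a: "uniformity \<U> \<and> delta_rotund \<U>" and U: "U \<in> \<U>"
  then obtain \<B> where "is_base \<U> \<B>" "multiplicative \<B>" "delta_rotund_base \<U> \<B>"
    unfolding delta_rotund_def by blast
  then interpret DR \<U> \<B> U using a U unfolding uniformity_def by unfold_locales auto
  show "\<exists>p. (\<forall>x y. p x y \<in> {0..1}) \<and> pseudometric p \<and>
                 uniform_premetric \<U> p \<and> right_continuous \<U> p \<and>
                 (\<forall>x. {y. p x y < 1} \<subseteq> uinterior \<U> (uclosure \<U> (U `` {x})))"
    using a unfolding uniformity_def by (intro exQ) blast
qed

end
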